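(* $\mathcal{L}_{AIL}\not\preceq\mathcal{L}_{FH}$: there exists $\psi\in\mathcal{L}_{AIL}$ such that no $\varphi\in\mathcal{L}_{FH}$ satisfies, for every epistemic model with awareness $M$ and every world $w$ of $M$, $M,w\vDash_{AIL}\psi$ iff $M,w\vDash_{FH}\varphi$.
   Context: Let $\mathcal{P}$ be a countable set of atoms and $\mathcal{G}$ a finite set of agents. An epistemic model with awareness is $M=\langle W,\{\sim_i,\mathscr{A}_i\}_{i\in\mathcal{G}},V\rangle$: $W\neq\emptyset$, $\sim_i$ an equivalence relation on $W$, $\mathscr{A}_i:W\to2^{\mathcal{P}}$ with $\mathscr{A}_i(w)=\mathscr{A}_i(v)$ whenever $(w,v)\in\sim_i$, $V:\mathcal{P}\to2^W$. $(w,v)\in\approx_i$ iff $\mathscr{A}_i(w)=\mathscr{A}_i(v)$ and $w,v$ agree on all $p\in\mathscr{A}_i(w)$. $\sim_i\circ\approx_i=\{(w,v):\exists t\,((w,t)\in\approx_i,(t,v)\in\sim_i)\}$; $R^+$ is the transitive closure. $\mathcal{L}_{AIL}$: $\varphi::=p\mid\neg\varphi\mid\varphi\wedge\varphi\mid A_i\varphi\mid I_i\varphi\mid E_i\varphi\mid[\approx]_i\varphi\mid[\circ^+]_i\varphi$; $\mathcal{L}_{FH}$ is the fragment without $[\approx]_i,[\circ^+]_i$. $\vDash_{AIL}$: $p$ iff $w\in V(p)$; Boolean usual; $A_i\varphi$ iff $At(\varphi)\subseteq\mathscr{A}_i(w)$ ($At$ = atoms occurring); $I_i\varphi$, $[\approx]_i\varphi$,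 $[\circ^+]_i\varphi$ iff $\varphi$ holds at all successors along $\sim_i$, $\approx_i$, $(\sim_i\circ\approx_i)^+$ respectively; $E_i\varphi$ iff $A_i\varphi$ and $[\circ^+]_i\varphi$ hold. $\vDash_{FH}$ on $\mathcal{L}_{FH}$ is the same except $E_i\varphi$ holds iff $A_i\varphi$ and $I_i\varphi$ hold. *)

theory Defs
  imports Main
begin

text \<open>Formulas of L_AIL over atoms 'p and agents 'g.  L_FH is the fragment
  without the modalities Approx and CircPlus.\<close>

datatype ('p, 'g) fm =
    Atom 'p
  | Neg "('p, 'g) fm"
  | Conj "('p, 'g) fm" "('p, 'g) fm"
  | Aw 'g "('p, 'g) fm"
  | Imp 'g "('p, 'g) fm"
  | Ex 'g "('p, 'g) fm"
  | Approx 'g "('p, 'g) fm"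
  | CircPlus 'g "('p, 'g) fm"

fun atoms :: "('p, 'g) fm \<Rightarrow> 'p set" where
  "atoms (Atom p) = {p}"
| "atoms (Neg f) = atoms f"
| "atoms (Conj f g) = atoms f \<union> atoms g"
| "atoms (Aw i f) = atoms f"
| "atoms (Imp i f) = atoms f"
| "atoms (Ex i f) = atoms f"
| "atoms (Approx i f) = atoms f"
| "atoms (CircPlus i f) = atoms f"

fun is_FH :: "('p, 'g) fm \<Rightarrow> bool" where
  "is_FH (Atom p) = True"
| "is_FH (Neg f) = is_FH f"
| "is_FH (Conj f g) = (is_FH f \<and> is_FH g)"
| "is_FH (Aw i f) = is_FH f"
| "is_FH (Imp i f) = is_FH f"
| "is_FH (Ex i f) = is_FH f"
| "is_FH (Approx i f) = False"
| "is_FH (CircPlus i f) = False"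

record ('w, 'p, 'g) model =
  W :: "'w set"
  sim :: "'g \<Rightarrow> ('w \<times> 'w) set"
  aw :: "'g \<Rightarrow> 'w \<Rightarrow> 'p set"
  val :: "'p \<Rightarrow> 'w set"

definition is_model :: "('w, 'p, 'g) model \<Rightarrow> bool" where
  "is_model M \<longleftrightarrow> W M \<noteq> {}
     \<and> (\<forall>i. equiv (W M) (sim M i))
     \<and> (\<forall>i w v. (w, v) \<in> sim M i \<longrightarrow> aw M i w = aw M i v)
     \<and> (\<forall>p. val M p \<subseteq> W M)"

definition approx :: "('w, 'p, 'g) model \<Rightarrow> 'g \<Rightarrow> ('w \<times> 'w) set" where
  "approx M i = {(w, v). w \<in> W M \<and> v \<in> W M \<and> aw M i w = aw M i v
      \<and> (\<forall>p \<in> aw M i w. (w \<in> val M p \<longleftrightarrow> v \<in> val M p))}"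

text \<open>sim_i \<circ> approx_i = {(w,v). \<exists>t. (w,t) \<in> approx_i \<and> (t,v) \<in> sim_i},
  i.e. relational composition approx_i O sim_i; then transitive closure.\<close>

definition circ_plus :: "('w, 'p, 'g) model \<Rightarrow> 'g \<Rightarrow> ('w \<times> 'w) set" where
  "circ_plus M i = (approx M i O sim M i)\<^sup>+"

fun sat_AIL :: "('w, 'p, 'g) model \<Rightarrow> 'w \<Rightarrow> ('p, 'g) fm \<Rightarrow> bool" where
  "sat_AIL M w (Atom p) = (w \<in> val M p)"
| "sat_AIL M w (Neg f) = (\<not> sat_AIL M w f)"
| "sat_AIL M w (Conj f g) = (sat_AIL M w f \<and> sat_AIL M w g)"
| "sat_AIL M w (Aw i f) = (atoms f \<subseteq> aw M i w)"
| "sat_AIL M w (Imp i f) = (\<forall>v. (w, v) \<in> sim M i \<longrightarrow> sat_AIL M v f)"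
| "sat_AIL M w (Ex i f) = (atoms f \<subseteq> aw M i w
      \<and> (\<forall>v. (w, v) \<in> circ_plus M i \<longrightarrow> sat_AIL M v f))"
| "sat_AIL M w (Approx i f) = (\<forall>v. (w, v) \<in> approx M i \<longrightarrow> sat_AIL M v f)"
| "sat_AIL M w (CircPlus i f) = (\<forall>v. (w, v) \<in> circ_plus M i \<longrightarrow> sat_AIL M v f)"

text \<open>FH semantics; only meaningful on the FH fragment (is_FH).  The clauses for
  Approx/CircPlus are irrelevant and just copied.\<close>

fun sat_FH :: "('w, 'p, 'g) model \<Rightarrow> 'w \<Rightarrow> ('p, 'g) fm \<Rightarrow> bool" where
  "sat_FH M w (Atom p) = (w \<in> val M p)"
| "sat_FH M w (Neg f) = (\<not> sat_FH M w f)"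
| "sat_FH M w (Conj f g) = (sat_FH M w f \<and> sat_FH M w g)"
| "sat_FH M w (Aw i f) = (atoms f \<subseteq> aw M i w)"
| "sat_FH M w (Imp i f) = (\<forall>v. (w, v) \<in> sim M i \<longrightarrow> sat_FH M v f)"
| "sat_FH M w (Ex i f) = (atoms f \<subseteq> aw M i w
      \<and> (\<forall>v. (w, v) \<in> sim M i \<longrightarrow> sat_FH M v f))"
| "sat_FH M w (Approx i f) = (\<forall>v. (w, v) \<in> approx M i \<longrightarrow> sat_FH M v f)"
| "sat_FH M w (CircPlus i f) = (\<forall>v. (w, v) \<in> circ_plus M i \<longrightarrow> sat_FH M v f)"

end

theory Submission
  imports Defs
begin

definition M1 :: "(nat, nat, 'g) model" where
  "M1 = \<lparr>W = {0}, sim = (\<lambda>i. Id_on {0}), aw = (\<lambda>i w. {}),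
         val = (\<lambda>p. if p = 0 then {0} else {})\<rparr>"

definition M2 :: "(nat, nat, 'g) model" where
  "M2 = \<lparr>W = {0, 1}, sim = (\<lambda>i. Id_on {0, 1}), aw = (\<lambda>i w. {}),
         val = (\<lambda>p. if p = 0 then {0} else {})\<rparr>"

lemma M1_model: "is_model (M1 :: (nat, nat, 'g) model)"
  unfolding is_model_def M1_def by (auto simp: equiv_def refl_on_def sym_def trans_def)

lemma M2_model: "is_model (M2 :: (nat, nat, 'g) model)"
  unfolding is_model_def M2_def by (auto simp: equiv_def refl_on_def sym_def trans_def)

lemma FH_eq: "is_FH (\<phi> :: (nat, 'g) fm) \<Longrightarrow>
  sat_FH (M1 :: (nat, nat, 'g) model) 0 \<phi> = sat_FH (M2 :: (nat, nat, 'g) model) 0 \<phi>"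
  by (induction \<phi>) (auto simp: M1_def M2_def)

lemma psi1: "sat_AIL (M1 :: (nat, nat, 'g) model) 0 (Approx i (Atom 0))"
  by (auto simp: M1_def approx_def)

lemma psi2: "\<not> sat_AIL (M2 :: (nat, nat, 'g) model) 0 (Approx i (Atom 0))"
  by (auto simp: M2_def approx_def)

theorem lemma4:
  "\<exists>\<psi> :: (nat, 'g::finite) fm.
     \<forall>\<phi> :: (nat, 'g) fm. is_FH \<phi> \<longrightarrow>
       (\<exists>M :: (nat, nat, 'g) model. \<exists>w \<in> W M.
          is_model M \<and> \<not> (sat_AIL M w \<psi> \<longleftrightarrow> sat_FH M w \<phi>))"
proof (rule exI[of _ "Approx undefined (Atom 0)"], intro allI impI)
  fix \<phi> :: "(nat, 'g) fm"
  define i :: 'g where "i = undefined"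
  assume h: "is_FH \<phi>"
  have w1: "(0::nat) \<in> W (M1 :: (nat, nat, 'g) model)" by (simp add: M1_def)
  have w2: "(0::nat) \<in> W (M2 :: (nat, nat, 'g) model)" by (simp add: M2_def)
  show "\<exists>M :: (nat, nat, 'g) model. \<exists>w \<in> W M.
          is_model M \<and> \<not> (sat_AIL M w (Approx undefined (Atom 0)) \<longleftrightarrow> sat_FH M w \<phi>)"
  proof (cases "sat_FH (M1 :: (nat, nat, 'g) model) 0 \<phi>")
    case True
    then show ?thesis using FH_eq[OF h] psi2[of undefined] M2_model w2 by blast
  next
    case False
    then show ?thesis using psi1[of undefined] M1_model w1 by blast
  qed
qed

end
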